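(* Let $A\in\mathfrak{H}_n$, $B\in\mathfrak{M}_n$, $N\in\mathbb{N}$. Then \[ \sum_{(k_1,\dots,k_N)\in\{1,\dots,l\}^N}\|M_{k_1,\dots,k_N}\|\le n\,e^{n\|B\|}. \]
   Context: Let $\lambda_1,\dots,\lambda_l$ be the distinct eigenvalues of the Hermitian matrix $A$ and $E_{\lambda_1},\dots,E_{\lambda_l}$ the corresponding orthogonal spectral projectors ($AE_{\lambda_j}=\lambda_jE_{\lambda_j}$, $\sum_j E_{\lambda_j}=I_n$). For $(k_1,\dots,k_N)\in\{1,\dots,l\}^N$, $M_{k_1,\dots,k_N}=E_{\lambda_{k_1}}e^{B/N}E_{\lambda_{k_2}}e^{B/N}\cdots E_{\lambda_{k_N}}e^{B/N}$. $\|\cdot\|$ is the operator norm. *)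

theory Defs
  imports "HOL-Analysis.Analysis"
begin

text \<open>Complex n x n matrices are modelled as complex^'n^'n (n = CARD('n)).\<close>

definition cnj_transpose :: "complex^'n^'m \<Rightarrow> complex^'m^'n" where
  "cnj_transpose M = (\<chi> i j. cnj (M $ j $ i))"

definition hermitian :: "complex^'n^'n \<Rightarrow> bool" where
  "hermitian M \<longleftrightarrow> cnj_transpose M = M"

definition eigenvalues :: "complex^'n^'n \<Rightarrow> complex set" where
  "eigenvalues M = {c. \<exists>v. v \<noteq> 0 \<and> M *v v = c *s v}"

primrec matpow :: "complex^'n^'n \<Rightarrow> nat \<Rightarrow> complex^'n^'n" where
  "matpow M 0 = mat 1"
| "matpow M (Suc k) = M ** matpow M k"

definition mexp :: "complex^'n^'n \<Rightarrow> complex^'n^'n" where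
  "mexp M = (\<Sum>k. (1 / fact k) *\<^sub>R matpow M k)"

definition opnorm :: "complex^'n^'n \<Rightarrow> real" where
  "opnorm M = onorm (\<lambda>x. M *v x)"

text \<open>Ordered product E(k 0) e^X E(k 1) e^X ... E(k (N-1)) e^X.\<close>
definition Mprod :: "(complex \<Rightarrow> complex^'n^'n) \<Rightarrow> complex^'n^'n \<Rightarrow> nat \<Rightarrow> (nat \<Rightarrow> complex) \<Rightarrow> complex^'n^'n" where
  "Mprod E X N k = foldr (\<lambda>i P. E (k i) ** X ** P) [0..<N] (mat 1)"

end

theory Submission
  imports Defs
begin
lemma opnorm_apply: "norm (M *v x) \<le> opnorm M * norm x"
  for M :: "complex^'n^'n"
  unfolding opnorm_def by (rule onorm) simp

lemma opnorm_le: "(\<And>x. norm (M *v x) \<le> c * norm x) \<Longrightarrow> opnorm M \<le> c"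
  for M :: "complex^'n^'n"
  unfolding opnorm_def by (rule onorm_le) auto

lemma opnorm_nonneg: "0 \<le> opnorm M" for M :: "complex^'n^'n"
  unfolding opnorm_def by (rule onorm_pos_le) simp

lemma opnorm_mult: "opnorm (P ** Q) \<le> opnorm P * opnorm Q" for P Q :: "complex^'n^'n"
proof (rule opnorm_le)
  fix x
  have "norm ((P ** Q) *v x) = norm (P *v (Q *v x))" by (simp add: matrix_vector_mul_assoc)
  also have "\<dots> \<le> opnorm P * norm (Q *v x)" by (rule opnorm_apply)
  also have "\<dots> \<le> opnorm P * (opnorm Q * norm x)"
    by (rule mult_left_mono[OF opnorm_apply opnorm_nonneg])
  finally show "norm ((P ** Q) *v x) \<le> opnorm P * opnorm Q * norm x" by (simp add: mult.assoc)
qed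

lemma norm_mat_sq: "(norm M)^2 = (\<Sum>i\<in>UNIV. \<Sum>j\<in>UNIV. (cmod (M$i$j))^2)"
  for M :: "complex^'n^'m"
  unfolding norm_vec_def L2_set_def
  by (simp add: sum_nonneg)

lemma norm_vsq: "(norm v)^2 = (\<Sum>i\<in>UNIV. (cmod (v$i))^2)"
  for v :: "complex^'n"
  unfolding norm_vec_def L2_set_def
  by (simp add: sum_nonneg)

lemma opnorm_le_norm: "opnorm M \<le> norm M" for M :: "complex^'n^'n"
proof (rule opnorm_le)
  fix x :: "complex^'n"
  have "(norm (M *v x))^2 \<le> (norm M * norm x)^2"
  proof -
    have "(norm (M *v x))^2 = (\<Sum>i\<in>UNIV. (cmod (\<Sum>j\<in>UNIV. M$i$j * x$j))^2)"
      by (simp add: norm_vsq matrix_vector_mult_def)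
    also have "\<dots> \<le> (\<Sum>i\<in>UNIV. (\<Sum>j\<in>UNIV. (cmod (M$i$j))^2) * (norm x)^2)"
    proof (rule sum_mono)
      fix i
      have "cmod (\<Sum>j\<in>UNIV. M$i$j * x$j) \<le> (\<Sum>j\<in>UNIV. \<bar>cmod (M$i$j)\<bar> * \<bar>cmod (x$j)\<bar>)"
        by (rule order_trans[OF norm_sum]) (simp add: norm_mult)
      also have "\<dots> \<le> L2_set (\<lambda>j. cmod (M$i$j)) UNIV * L2_set (\<lambda>j. cmod (x$j)) UNIV"
        by (rule L2_set_mult_ineq)
      finally have h: "cmod (\<Sum>j\<in>UNIV. M$i$j * x$j) \<le> L2_set (\<lambda>j. cmod (M$i$j)) UNIV * norm x"
        by (simp add: norm_vec_def)
      have "(cmod (\<Sum>j\<in>UNIV. M$i$j * x$j))^2 \<le> (L2_set (\<lambda>j. cmod (M$i$j)) UNIV * norm x)^2"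
        by (rule power_mono[OF h]) simp
      also have "\<dots> = (\<Sum>j\<in>UNIV. (cmod (M$i$j))^2) * (norm x)^2"
        by (simp add: power_mult_distrib L2_set_def sum_nonneg)
      finally show "(cmod (\<Sum>j\<in>UNIV. M$i$j * x$j))^2 \<le> (\<Sum>j\<in>UNIV. (cmod (M$i$j))^2) * (norm x)^2" .
    qed
    also have "\<dots> = (norm M * norm x)^2"
      by (simp add: norm_mat_sq power_mult_distrib sum_distrib_right)
    finally show ?thesis .
  qed
  then show "norm (M *v x) \<le> norm M * norm x"
    by (rule power2_le_imp_le) simp
qed


definition cinner :: "complex^'n \<Rightarrow> complex^'n \<Rightarrow> complex" where
  "cinner x y = (\<Sum>i\<in>UNIV. x$i * cnj (y$i))"

lemma inner_cinner: "inner x y = Re (cinner x y)" for x y :: "complex^'n"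
  by (simp add: inner_vec_def cinner_def inner_complex_def Re_sum)

lemma cinner_adj: "cinner (M *v x) y = cinner x (cnj_transpose M *v y)"
  for M :: "complex^'n^'n"
proof -
  have "cinner (M *v x) y = (\<Sum>i\<in>UNIV. \<Sum>j\<in>UNIV. M$i$j * x$j * cnj (y$i))"
    unfolding cinner_def matrix_vector_mult_def by (simp add: sum_distrib_right)
  also have "\<dots> = (\<Sum>j\<in>UNIV. \<Sum>i\<in>UNIV. M$i$j * x$j * cnj (y$i))"
    by (rule sum.swap)
  also have "\<dots> = cinner x (cnj_transpose M *v y)"
    unfolding cinner_def matrix_vector_mult_def cnj_transpose_def
    by (simp add: sum_distrib_left cnj_sum mult_ac)
  finally show ?thesis .
qed

definition projsys :: "'a set \<Rightarrow> ('a \<Rightarrow> complex^'n^'n) \<Rightarrow> bool" where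
  "projsys S P \<longleftrightarrow> finite S \<and> (\<forall>a\<in>S. hermitian (P a)) \<and>
     (\<forall>a\<in>S. \<forall>b\<in>S. P a ** P b = (if a = b then P a else 0)) \<and> (\<Sum>a\<in>S. P a) = mat 1"

lemma sum_mvmult: "(\<Sum>a\<in>S. f a) *v v = (\<Sum>a\<in>S. f a *v v)"
  for f :: "'a \<Rightarrow> complex^'n^'n"
  by (induct S rule: infinite_finite_induct) (auto simp: matrix_vector_mult_add_rdistrib)

lemma projsys_O1:
  assumes "projsys S P"
  shows "(\<Sum>a\<in>S. (norm (P a *v v))^2) = (norm v)^2"
proof -
  from assms have fin: "finite S" and herm: "\<And>a. a\<in>S \<Longrightarrow> hermitian (P a)"
    and orth: "\<And>a b. a\<in>S \<Longrightarrow> b\<in>S \<Longrightarrow> P a ** P b = (if a = b then P a else 0)"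
    and sI: "(\<Sum>a\<in>S. P a) = mat 1"
    unfolding projsys_def by auto
  have "v = (\<Sum>a\<in>S. P a *v v)" using sI by (simp flip: sum_mvmult)
  then have "(norm v)^2 = (norm (\<Sum>a\<in>S. P a *v v))^2" by simp
  also have "\<dots> = (\<Sum>a\<in>S. (norm (P a *v v))^2)"
  proof (rule norm_sum_Pythagorean[OF fin])
    show "pairwise (\<lambda>a b. orthogonal (P a *v v) (P b *v v)) S"
      unfolding pairwise_def orthogonal_def
    proof (intro ballI impI)
      fix a b assume ab: "a \<in> S" "b \<in> S" "a \<noteq> b"
      have "cinner (P a *v v) (P b *v v) = cinner v ((cnj_transpose (P a) ** P b) *v v)"
        by (simp add: cinner_adj matrix_vector_mul_assoc)
      also have "\<dots> = 0" using ab herm[of a] orth[of a b] unfolding hermitian_def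
        by (simp add: cinner_def)
      finally show "inner (P a *v v) (P b *v v) = 0" by (simp add: inner_cinner)
    qed
  qed
  finally show ?thesis by simp
qed

lemma norm_mat_cols: "(norm M)^2 = (\<Sum>j\<in>UNIV. (norm (M *v axis j 1))^2)"
  for M :: "complex^'n^'m"
proof -
  have c: "(M *v axis j 1) $ i = M$i$j" for i j
    by (simp add: matrix_vector_mult_def axis_def if_distrib if_distribR cong: if_cong)
  show ?thesis
    unfolding norm_mat_sq norm_vsq c by (rule sum.swap)
qed

lemma projsys_O2:
  assumes "projsys S P"
  shows "(\<Sum>a\<in>S. (norm (P a ** Z))^2) = (norm Z)^2"
proof -
  have "(\<Sum>a\<in>S. (norm (P a ** Z))^2) = (\<Sum>a\<in>S. \<Sum>j\<in>UNIV. (norm (P a *v (Z *v axis j 1)))^2)"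
    by (simp add: norm_mat_cols matrix_vector_mul_assoc)
  also have "\<dots> = (\<Sum>j\<in>UNIV. \<Sum>a\<in>S. (norm (P a *v (Z *v axis j 1)))^2)"
    by (rule sum.swap)
  also have "\<dots> = (norm Z)^2"
    by (simp add: projsys_O1[OF assms] norm_mat_cols)
  finally show ?thesis .
qed

lemma norm_transpose: "norm (transpose M) = norm M" for M :: "complex^'n^'m"
proof -
  have "(norm (transpose M))^2 = (norm M)^2"
    unfolding norm_mat_sq transpose_def by (simp only: vec_lambda_beta) (rule sum.swap)
  then show ?thesis by (simp add: power2_eq_iff_nonneg)
qed

lemma transpose_sum: "transpose (\<Sum>a\<in>S. f a) = (\<Sum>a\<in>S. transpose (f a))"
  for f :: "'a \<Rightarrow> complex^'n^'n"
  by (induct S rule: infinite_finite_induct) (auto simp: transpose_def vec_eq_iff)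

lemma projsys_transpose:
  assumes "projsys S P"
  shows "projsys S (\<lambda>a. transpose (P a))"
proof -
  from assms have fin: "finite S" and herm: "\<And>a. a\<in>S \<Longrightarrow> hermitian (P a)"
    and orth: "\<And>a b. a\<in>S \<Longrightarrow> b\<in>S \<Longrightarrow> P a ** P b = (if a = b then P a else 0)"
    and sI: "(\<Sum>a\<in>S. P a) = mat 1"
    unfolding projsys_def by auto
  have h: "hermitian (transpose (P a))" if "a \<in> S" for a
  proof -
    have "cnj_transpose (P a) = P a" using herm[OF that] by (simp add: hermitian_def)
    then have "\<forall>i j. cnj (P a $ j $ i) = P a $ i $ j"
      by (simp add: cnj_transpose_def vec_eq_iff)
    then show ?thesis unfolding hermitian_def cnj_transpose_def transpose_def
      by (simp add: vec_eq_iff)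
  qed
  have o: "transpose (P a) ** transpose (P b) = (if a = b then transpose (P a) else 0)"
    if "a \<in> S" "b \<in> S" for a b
  proof -
    have "transpose (P a) ** transpose (P b) = transpose (P b ** P a)"
      by (simp add: matrix_transpose_mul)
    also have "\<dots> = (if a = b then transpose (P a) else 0)"
      using orth[OF that(2,1)] by (auto simp: transpose_def vec_eq_iff)
    finally show ?thesis .
  qed
  show ?thesis unfolding projsys_def
    using fin h o sI by (simp add: transpose_sum[symmetric])
qed

lemma projsys_O3:
  assumes "projsys S P"
  shows "(\<Sum>b\<in>S. (norm (Z ** P b))^2) = (norm Z)^2"
proof -
  have "(\<Sum>b\<in>S. (norm (Z ** P b))^2) = (\<Sum>b\<in>S. (norm (transpose (P b) ** transpose Z))^2)"
  proof (rule sum.cong[OF refl])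
    fix b
    have "norm (Z ** P b) = norm (transpose (Z ** P b))" by (rule norm_transpose[symmetric])
    then show "(norm (Z ** P b))^2 = (norm (transpose (P b) ** transpose Z))^2"
      by (simp add: matrix_transpose_mul)
  qed
  also have "\<dots> = (norm (transpose Z))^2"
    by (rule projsys_O2[OF projsys_transpose[OF assms]])
  finally show ?thesis by (simp add: norm_transpose)
qed

lemma projsys_opnorm:
  assumes "projsys S P" "a \<in> S"
  shows "opnorm (P a) \<le> 1"
proof (rule opnorm_le)
  fix x
  have fin: "finite S" using assms unfolding projsys_def by auto
  have "(norm (P a *v x))^2 \<le> (\<Sum>b\<in>S. (norm (P b *v x))^2)"
    by (rule member_le_sum[OF assms(2) _ fin]) simp
  also have "\<dots> = (norm x)^2" by (rule projsys_O1[OF assms(1)])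
  finally have "norm (P a *v x) \<le> norm x" by (rule power2_le_imp_le) simp
  then show "norm (P a *v x) \<le> 1 * norm x" by simp
qed

lemma mat_mult_left: "mat c ** M = (\<chi> i j. c * M$i$j)" for M :: "complex^'n^'n"
  by (simp add: matrix_matrix_mult_def mat_def vec_eq_iff if_distrib if_distribR sum.delta cong: if_cong)

lemma mat_mult_right: "M ** mat c = (\<chi> i j. M$i$j * c)" for M :: "complex^'n^'n"
  by (simp add: matrix_matrix_mult_def mat_def vec_eq_iff if_distrib if_distribR sum.delta' cong: if_cong)

lemma mat_comm: "M ** mat c = mat c ** M" for M :: "complex^'n^'n"
  by (simp add: mat_mult_left mat_mult_right mult.commute)

lemma cnj_transpose_mult: "cnj_transpose (P ** Q) = cnj_transpose Q ** cnj_transpose P"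
  for P Q :: "complex^'n^'n"
  by (simp add: cnj_transpose_def matrix_matrix_mult_def vec_eq_iff cnj_sum mult.commute)

lemma cnj_transpose_mat: "cnj_transpose (mat c :: complex^'n^'n) = mat (cnj c)"
  by (simp add: cnj_transpose_def mat_def vec_eq_iff)

lemma cinner_scale_left: "cinner (c *s x) y = c * cinner x y"
  by (simp add: cinner_def sum_distrib_left mult.assoc)

lemma cinner_scale_right: "cinner x (c *s y) = cnj c * cinner x y"
  by (simp add: cinner_def sum_distrib_left mult_ac)

lemma cinner_self: "cinner x x = complex_of_real ((norm x)^2)"
proof -
  have "cinner x x = (\<Sum>i\<in>UNIV. complex_of_real ((cmod (x$i))^2))"
    unfolding cinner_def by (rule sum.cong[OF refl]) (metis complex_norm_square)
  then show ?thesis by (simp add: norm_vsq)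
qed

lemma herm_eig_real:
  fixes A :: "complex^'n^'n"
  assumes "hermitian A" "\<mu> \<in> eigenvalues A"
  shows "cnj \<mu> = \<mu>"
proof -
  obtain v where v: "v \<noteq> 0" "A *v v = \<mu> *s v" using assms(2) unfolding eigenvalues_def by auto
  have "cinner (A *v v) v = cinner v (A *v v)"
    using assms(1) by (simp add: cinner_adj hermitian_def)
  then have "\<mu> * cinner v v = cnj \<mu> * cinner v v"
    by (simp add: v(2) cinner_scale_left cinner_scale_right)
  moreover have "cinner v v \<noteq> 0" using v(1) by (simp add: cinner_self)
  ultimately show ?thesis by simp
qed

lemma EA_left:
  fixes A :: "complex^'n^'n" and E :: "complex \<Rightarrow> complex^'n^'n"
  assumes herm: "hermitian A"
    and proj: "\<And>\<mu>. \<mu> \<in> eigenvalues A \<Longrightarrow> hermitian (E \<mu>) \<and> E \<mu> ** E \<mu> = E \<mu>"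
    and eig: "\<And>\<mu>. \<mu> \<in> eigenvalues A \<Longrightarrow> A ** E \<mu> = mat \<mu> ** E \<mu>"
    and a: "a \<in> eigenvalues A"
  shows "E a ** A = mat a ** E a"
proof -
  have "E a ** A = cnj_transpose (A ** E a)"
    using herm proj[OF a] by (simp add: cnj_transpose_mult hermitian_def)
  also have "\<dots> = cnj_transpose (mat a ** E a)" by (simp add: eig[OF a])
  also have "\<dots> = E a ** mat a"
    using proj[OF a] herm_eig_real[OF herm a] by (simp add: cnj_transpose_mult hermitian_def cnj_transpose_mat)
  also have "\<dots> = mat a ** E a" by (simp add: mat_mult_left mat_mult_right mult.commute)
  finally show ?thesis .
qed

lemma E_orth:
  fixes A :: "complex^'n^'n" and E :: "complex \<Rightarrow> complex^'n^'n"
  assumes herm: "hermitian A"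
    and proj: "\<And>\<mu>. \<mu> \<in> eigenvalues A \<Longrightarrow> hermitian (E \<mu>) \<and> E \<mu> ** E \<mu> = E \<mu>"
    and eig: "\<And>\<mu>. \<mu> \<in> eigenvalues A \<Longrightarrow> A ** E \<mu> = mat \<mu> ** E \<mu>"
    and a: "a \<in> eigenvalues A" and b: "b \<in> eigenvalues A" and ab: "a \<noteq> b"
  shows "E a ** E b = 0"
proof -
  have "E a ** A ** E b = E a ** (mat b ** E b)"
    by (simp add: matrix_mul_assoc[symmetric] eig[OF b])
  also have "\<dots> = mat b ** (E a ** E b)"
    by (metis mat_comm matrix_mul_assoc)
  finally have 1: "E a ** A ** E b = mat b ** (E a ** E b)" .
  have 2: "E a ** A ** E b = mat a ** (E a ** E b)"
    using EA_left[OF herm proj eig a] by (simp add: matrix_mul_assoc)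
  from 1 2 have "\<forall>i j. b * (E a ** E b)$i$j = a * (E a ** E b)$i$j"
    by (auto simp: mat_mult_left vec_eq_iff)
  then show ?thesis using ab by (simp add: vec_eq_iff)
qed

lemma mat1_nz: "(mat 1 :: complex^'n^'n) \<noteq> 0"
proof
  assume "(mat 1 :: complex^'n^'n) = 0"
  then have "(mat 1 :: complex^'n^'n) $ undefined $ undefined = 0" by simp
  then show False by (simp add: mat_def)
qed

lemma mvmult_scale: "M *v (c *s v) = c *s (M *v v)" for M :: "complex^'n^'n"
  by (simp add: matrix_vector_mult_def vec_eq_iff sum_distrib_left mult_ac)

lemma mat_mvmult: "(mat c ** M) *v v = c *s (M *v v)" for M :: "complex^'n^'n"
  by (simp add: mat_mult_left matrix_vector_mult_def vec_eq_iff sum_distrib_left mult_ac)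

lemma E_projsys:
  fixes A :: "complex^'n^'n" and E :: "complex \<Rightarrow> complex^'n^'n"
  assumes herm: "hermitian A"
    and proj: "\<And>\<mu>. \<mu> \<in> eigenvalues A \<Longrightarrow> hermitian (E \<mu>) \<and> E \<mu> ** E \<mu> = E \<mu>"
    and eig: "\<And>\<mu>. \<mu> \<in> eigenvalues A \<Longrightarrow> A ** E \<mu> = mat \<mu> ** E \<mu>"
    and sumI: "(\<Sum>\<mu>\<in>eigenvalues A. E \<mu>) = mat 1"
  shows "projsys (eigenvalues A) E"
proof -
  have fin: "finite (eigenvalues A)"
  proof (rule ccontr)
    assume "infinite (eigenvalues A)"
    then have "(\<Sum>\<mu>\<in>eigenvalues A. E \<mu>) = 0" by simp
    with sumI show False by (metis mat1_nz)
  qed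
  show ?thesis unfolding projsys_def
    using fin proj sumI E_orth[OF herm proj eig] by auto
qed

lemma E_nonzero:
  fixes A :: "complex^'n^'n" and E :: "complex \<Rightarrow> complex^'n^'n"
  assumes herm: "hermitian A"
    and proj: "\<And>\<mu>. \<mu> \<in> eigenvalues A \<Longrightarrow> hermitian (E \<mu>) \<and> E \<mu> ** E \<mu> = E \<mu>"
    and eig: "\<And>\<mu>. \<mu> \<in> eigenvalues A \<Longrightarrow> A ** E \<mu> = mat \<mu> ** E \<mu>"
    and sumI: "(\<Sum>\<mu>\<in>eigenvalues A. E \<mu>) = mat 1"
    and a: "a \<in> eigenvalues A"
  shows "E a \<noteq> 0"
proof
  assume Ea: "E a = 0"
  have ps: "projsys (eigenvalues A) E" by (rule E_projsys[OF herm proj eig sumI])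
  then have fin: "finite (eigenvalues A)" unfolding projsys_def by simp
  obtain v where v: "v \<noteq> 0" "A *v v = a *s v" using a unfolding eigenvalues_def by auto
  have z: "E c *v v = 0" if c: "c \<in> eigenvalues A" "c \<noteq> a" for c
  proof -
    have "c *s (E c *v v) = (E c ** A) *v v"
      by (simp add: EA_left[OF herm proj eig c(1)] mat_mvmult)
    also have "\<dots> = a *s (E c *v v)"
      by (simp add: matrix_vector_mul_assoc[symmetric] v(2) mvmult_scale)
    finally have "(c - a) *s (E c *v v) = 0"
      by (simp add: vector_sub_rdistrib)
    then show ?thesis using c(2) by (simp add: vec_eq_iff)
  qed
  have "v = (\<Sum>c\<in>eigenvalues A. E c *v v)" using sumI by (simp flip: sum_mvmult)
  also have "\<dots> = E a *v v + (\<Sum>c\<in>eigenvalues A - {a}. E c *v v)"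
    by (rule sum.remove[OF fin a])
  also have "\<dots> = 0" using Ea z by simp
  finally show False using v(1) by simp
qed

lemma norm_mat1: "(norm (mat 1 :: complex^'n^'n))^2 = real CARD('n)"
  by (simp add: norm_mat_sq mat_def if_distrib if_distribR sum.delta cong: if_cong)

lemma card_eig:
  fixes A :: "complex^'n^'n" and E :: "complex \<Rightarrow> complex^'n^'n"
  assumes herm: "hermitian A"
    and proj: "\<And>\<mu>. \<mu> \<in> eigenvalues A \<Longrightarrow> hermitian (E \<mu>) \<and> E \<mu> ** E \<mu> = E \<mu>"
    and eig: "\<And>\<mu>. \<mu> \<in> eigenvalues A \<Longrightarrow> A ** E \<mu> = mat \<mu> ** E \<mu>"
    and sumI: "(\<Sum>\<mu>\<in>eigenvalues A. E \<mu>) = mat 1"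
  shows "real (card (eigenvalues A)) \<le> real CARD('n)"
proof -
  have ps: "projsys (eigenvalues A) E" by (rule E_projsys[OF herm proj eig sumI])
  have ge1: "1 \<le> (norm (E a))^2" if a: "a \<in> eigenvalues A" for a
  proof -
    have "E a \<noteq> 0" by (rule E_nonzero[OF herm proj eig sumI a])
    then obtain x where x: "E a *v x \<noteq> 0" using matrix_eq[of "E a" 0] by auto
    define y where "y = E a *v x"
    have "E a *v y = y" using proj[OF a] by (simp add: y_def matrix_vector_mul_assoc)
    then have "norm y \<le> opnorm (E a) * norm y" by (metis opnorm_apply)
    also have "\<dots> \<le> norm (E a) * norm y"
      by (rule mult_right_mono[OF opnorm_le_norm]) simp
    finally have "1 \<le> norm (E a)" using x by (simp add: y_def)
    then show ?thesis by (simp add: one_le_power)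
  qed
  have "real (card (eigenvalues A)) = (\<Sum>a\<in>eigenvalues A. 1)" by simp
  also have "\<dots> \<le> (\<Sum>a\<in>eigenvalues A. (norm (E a ** mat 1))^2)"
    by (rule sum_mono) (simp add: ge1)
  also have "\<dots> = real CARD('n)" using projsys_O2[OF ps, of "mat 1"] norm_mat1 by simp
  finally show ?thesis .
qed

lemma opnorm_mat1: "opnorm (mat 1 :: complex^'n^'n) \<le> 1"
  by (rule opnorm_le) simp

lemma opnorm_matpow: "opnorm (matpow C k) \<le> opnorm C ^ k"
proof (induct k)
  case 0 then show ?case by (simp add: opnorm_mat1)
next
  case (Suc k)
  have "opnorm (matpow C (Suc k)) \<le> opnorm C * opnorm (matpow C k)"
    by (simp add: opnorm_mult)
  also have "\<dots> \<le> opnorm C * opnorm C ^ k"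
    by (rule mult_left_mono[OF Suc opnorm_nonneg])
  finally show ?case by simp
qed

lemma cmod_axis: "norm (axis j (1::complex) :: complex^'n) = 1"
  by (simp add: norm_vec_def L2_set_def axis_def if_distrib if_distribR sum.delta cong: if_cong)

lemma norm_le_opnorm: "(norm M)^2 \<le> real CARD('n) * (opnorm M)^2" for M :: "complex^'n^'n"
proof -
  have "(norm M)^2 = (\<Sum>j\<in>UNIV. (norm (M *v axis j 1))^2)" by (rule norm_mat_cols)
  also have "\<dots> \<le> (\<Sum>j\<in>(UNIV::'n set). (opnorm M)^2)"
  proof (rule sum_mono)
    fix j :: 'n
    have "norm (M *v axis j 1) \<le> opnorm M" using opnorm_apply[of M "axis j 1"] by (simp add: cmod_axis)
    then show "(norm (M *v axis j 1))^2 \<le> (opnorm M)^2" by (rule power_mono) simp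
  qed
  finally show ?thesis by simp
qed

lemma norm_le_opnorm': "norm M \<le> sqrt (real CARD('n)) * opnorm M" for M :: "complex^'n^'n"
proof -
  have "norm M = sqrt ((norm M)^2)" by simp
  also have "\<dots> \<le> sqrt (real CARD('n) * (opnorm M)^2)" by (rule real_sqrt_le_mono[OF norm_le_opnorm])
  also have "\<dots> = sqrt (real CARD('n)) * opnorm M" by (simp add: real_sqrt_mult opnorm_nonneg)
  finally show ?thesis .
qed

lemma scaleR_mv: "(r *\<^sub>R M) *v x = r *\<^sub>R (M *v x)" for M :: "complex^'n^'n"
  by (simp add: matrix_vector_mult_def vec_eq_iff scaleR_sum_right)

lemma bl_apply: "bounded_linear (\<lambda>M::complex^'n^'n. M *v x)"
proof (rule bounded_linear_intro[where K="norm x"])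
  fix M N :: "complex^'n^'n" and r :: real
  show "(M + N) *v x = M *v x + N *v x" by (simp add: matrix_vector_mult_add_rdistrib)
  show "(r *\<^sub>R M) *v x = r *\<^sub>R (M *v x)"
    by (simp add: matrix_vector_mult_def vec_eq_iff scaleR_sum_right)
  have "norm (M *v x) \<le> opnorm M * norm x" by (rule opnorm_apply)
  also have "\<dots> \<le> norm M * norm x" by (rule mult_right_mono[OF opnorm_le_norm]) simp
  finally show "norm (M *v x) \<le> norm M * norm x" .
qed

lemma mexp_summable: "summable (\<lambda>k. (1 / fact k) *\<^sub>R matpow C k)"
  for C :: "complex^'n^'n"
proof (rule summable_comparison_test'[where N=0])
  show "summable (\<lambda>k. sqrt (real CARD('n)) * (opnorm C ^ k /\<^sub>R fact k))"
    by (rule summable_mult[OF summable_exp_generic])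
  fix k :: nat
  have "norm ((1 / fact k) *\<^sub>R matpow C k) = (1 / fact k) * norm (matpow C k)" by simp
  also have "\<dots> \<le> (1 / fact k) * (sqrt (real CARD('n)) * opnorm C ^ k)"
    by (rule mult_left_mono[OF order_trans[OF norm_le_opnorm' mult_left_mono[OF opnorm_matpow]]]) auto
  finally show "norm ((1 / fact k) *\<^sub>R matpow C k) \<le> sqrt (real CARD('n)) * (opnorm C ^ k /\<^sub>R fact k)"
    by (simp add: divide_inverse mult_ac)
qed

lemma mexp_apply: "mexp C *v x = (\<Sum>k. (1 / fact k) *\<^sub>R (matpow C k *v x))"
  for C :: "complex^'n^'n"
proof -
  have "mexp C *v x = (\<Sum>k. (1 / fact k) *\<^sub>R matpow C k *v x)"
    unfolding mexp_def by (rule bounded_linear.suminf[OF bl_apply mexp_summable])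
  also have "\<dots> = (\<Sum>k. (1 / fact k) *\<^sub>R (matpow C k *v x))"
    by (simp only: scaleR_mv)
  finally show ?thesis .
qed

lemma term_bound: "norm ((1 / fact k) *\<^sub>R (matpow C k *v x)) \<le> opnorm C ^ k /\<^sub>R fact k * norm x"
  for C :: "complex^'n^'n"
proof -
  have "norm ((1 / fact k) *\<^sub>R (matpow C k *v x)) = (1 / fact k) * norm (matpow C k *v x)" by simp
  also have "\<dots> \<le> (1 / fact k) * (opnorm C ^ k * norm x)"
    by (rule mult_left_mono[OF order_trans[OF opnorm_apply mult_right_mono[OF opnorm_matpow]]]) auto
  finally show ?thesis by (simp add: divide_inverse mult_ac)
qed

lemma mexp_opnorm: "opnorm (mexp C) \<le> exp (opnorm C)" for C :: "complex^'n^'n"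
proof (rule opnorm_le)
  fix x :: "complex^'n"
  have s: "(\<lambda>k. opnorm C ^ k /\<^sub>R fact k * norm x) sums (exp (opnorm C) * norm x)"
    by (rule sums_mult2[OF exp_converges])
  have "norm (mexp C *v x) \<le> (\<Sum>k. opnorm C ^ k /\<^sub>R fact k * norm x)"
    unfolding mexp_apply by (rule norm_suminf_le[OF term_bound sums_summable[OF s]])
  also have "\<dots> = exp (opnorm C) * norm x" using s by (simp add: sums_iff)
  finally show "norm (mexp C *v x) \<le> exp (opnorm C) * norm x" .
qed

lemma mexp_opnorm1: "opnorm (mexp C - mat 1) \<le> exp (opnorm C) - 1" for C :: "complex^'n^'n"
proof (rule opnorm_le)
  fix x :: "complex^'n"
  have s: "(\<lambda>k. opnorm C ^ k /\<^sub>R fact k * norm x) sums (exp (opnorm C) * norm x)"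
    by (rule sums_mult2[OF exp_converges])
  have s1: "(\<lambda>k. opnorm C ^ Suc k /\<^sub>R fact (Suc k) * norm x) sums (exp (opnorm C) * norm x - norm x)"
    using s by (subst sums_Suc_iff) simp
  have sm: "summable (\<lambda>k. (1 / fact k) *\<^sub>R (matpow C k *v x))"
    by (rule summable_comparison_test'[OF sums_summable[OF s]]) (rule term_bound)
  have "(mexp C - mat 1) *v x = (\<Sum>k. (1 / fact (Suc k)) *\<^sub>R (matpow C (Suc k) *v x))"
    unfolding matrix_vector_mult_diff_rdistrib mexp_apply suminf_split_head[OF sm]
    by simp
  also have "norm \<dots> \<le> (\<Sum>k. opnorm C ^ Suc k /\<^sub>R fact (Suc k) * norm x)"
    by (rule norm_suminf_le[OF term_bound sums_summable[OF s1]])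
  also have "\<dots> = (exp (opnorm C) - 1) * norm x" using s1 by (simp add: sums_iff algebra_simps)
  finally show "norm ((mexp C - mat 1) *v x) \<le> (exp (opnorm C) - 1) * norm x" .
qed

lemma foldr_mat_tail:
  "foldr (\<lambda>i P. E (k i) ** X ** P) xs z = foldr (\<lambda>i P. E (k i) ** X ** P) xs (mat 1) ** (z :: complex^'n^'n)"
  by (induct xs) (simp_all add: matrix_mul_assoc)

lemma Mprod_Suc: "Mprod E X (Suc m) k = Mprod E X m k ** (E (k m) ** X)"
  unfolding Mprod_def by simp (rule foldr_mat_tail)

lemma Mprod_upd: "Mprod E X m (k(m := b)) = Mprod E X m k"
  unfolding Mprod_def by (rule foldr_cong) auto

lemma Mprod_0: "Mprod E X 0 k = mat 1"
  unfolding Mprod_def by simp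

lemma sum_PiE_peel:
  fixes g :: "(nat \<Rightarrow> 'a) \<Rightarrow> real"
  assumes fin: "finite S"
  shows "(\<Sum>k\<in>{0..<Suc m} \<rightarrow>\<^sub>E S. g k) = (\<Sum>b\<in>S. \<Sum>k\<in>{0..<m} \<rightarrow>\<^sub>E S. g (k(m := b)))"
proof -
  have eq: "{0..<Suc m} = insert m {0..<m}" by auto
  have inj: "inj_on (\<lambda>(y, g). g(m := y)) (S \<times> ({0..<m} \<rightarrow>\<^sub>E S))"
    using inj_combinator[of m "{0..<m}" "\<lambda>_. S"] by simp
  have "(\<Sum>k\<in>{0..<Suc m} \<rightarrow>\<^sub>E S. g k) = (\<Sum>k\<in>(\<lambda>(y, g). g(m := y)) ` (S \<times> ({0..<m} \<rightarrow>\<^sub>E S)). g k)"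
    unfolding eq PiE_insert_eq by simp
  also have "\<dots> = (\<Sum>p\<in>S \<times> ({0..<m} \<rightarrow>\<^sub>E S). g ((snd p)(m := fst p)))"
    by (subst sum.reindex[OF inj]) (simp add: case_prod_beta)
  also have "\<dots> = (\<Sum>b\<in>S. \<Sum>k\<in>{0..<m} \<rightarrow>\<^sub>E S. g (k(m := b)))"
    by (subst sum.cartesian_product) (simp add: case_prod_beta)
  finally show ?thesis .
qed

lemma L2_step:
  fixes H H' :: "'a \<Rightarrow> real" and w r :: "'a \<Rightarrow> 'a \<Rightarrow> real"
  assumes fin: "finite S"
    and Hnn: "\<And>a. a \<in> S \<Longrightarrow> 0 \<le> H a"
    and H'le: "\<And>b. b \<in> S \<Longrightarrow> H' b \<le> (\<Sum>a\<in>S. H a * w a b)"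
    and H'nn: "\<And>b. b \<in> S \<Longrightarrow> 0 \<le> H' b"
    and wle: "\<And>a b. a \<in> S \<Longrightarrow> b \<in> S \<Longrightarrow> w a b \<le> (if a = b then 1 else 0) + r a b"
    and rnn: "\<And>a b. a \<in> S \<Longrightarrow> b \<in> S \<Longrightarrow> 0 \<le> r a b"
    and rho: "sqrt (\<Sum>b\<in>S. \<Sum>a\<in>S. (r a b)^2) \<le> \<rho>"
  shows "L2_set H' S \<le> (1 + \<rho>) * L2_set H S"
proof -
  define G where "G b = (\<Sum>a\<in>S. H a * r a b)" for b
  have Gnn: "0 \<le> G b" if "b \<in> S" for b
    unfolding G_def using Hnn rnn that by (auto intro!: sum_nonneg)
  have 1: "H' b \<le> H b + G b" if b: "b \<in> S" for b
  proof -
    have "H' b \<le> (\<Sum>a\<in>S. H a * w a b)" by (rule H'le[OF b])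
    also have "\<dots> \<le> (\<Sum>a\<in>S. H a * ((if a = b then 1 else 0) + r a b))"
    proof (rule sum_mono)
      fix a assume a: "a \<in> S"
      show "H a * w a b \<le> H a * ((if a = b then 1 else 0) + r a b)"
        using mult_left_mono[OF wle[OF a b] Hnn[OF a]] .
    qed
    also have "\<dots> = (\<Sum>a\<in>S. H a * (if a = b then 1 else 0)) + G b"
      unfolding G_def distrib_left sum.distrib ..
    also have "(\<Sum>a\<in>S. H a * (if a = b then 1 else 0)) = (\<Sum>a\<in>S. (if a = b then H b else 0))"
      by (rule sum.cong) auto
    also have "\<dots> = H b" using fin b by (simp only: sum.delta) simp
    finally show ?thesis .
  qed
  have 2: "G b \<le> L2_set H S * L2_set (\<lambda>a. r a b) S" if b: "b \<in> S" for b
  proof -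
    have "G b = (\<Sum>a\<in>S. \<bar>H a\<bar> * \<bar>r a b\<bar>)"
      unfolding G_def using Hnn rnn b by (intro sum.cong) auto
    also have "\<dots> \<le> L2_set H S * L2_set (\<lambda>a. r a b) S" by (rule L2_set_mult_ineq)
    finally show ?thesis .
  qed
  have 3: "L2_set (\<lambda>b. L2_set (\<lambda>a. r a b) S) S = sqrt (\<Sum>b\<in>S. \<Sum>a\<in>S. (r a b)^2)"
    unfolding L2_set_def by (simp add: sum_nonneg)
  have "L2_set H' S \<le> L2_set (\<lambda>b. H b + G b) S"
    by (rule L2_set_mono[OF 1 H'nn])
  also have "\<dots> \<le> L2_set H S + L2_set G S" by (rule L2_set_triangle_ineq)
  also have "L2_set G S \<le> L2_set (\<lambda>b. L2_set H S * L2_set (\<lambda>a. r a b) S) S"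
    by (rule L2_set_mono[OF 2 Gnn])
  also have "\<dots> = L2_set H S * sqrt (\<Sum>b\<in>S. \<Sum>a\<in>S. (r a b)^2)"
    by (simp add: L2_set_right_distrib[symmetric] 3)
  also have "\<dots> \<le> L2_set H S * \<rho>" by (rule mult_left_mono[OF rho]) simp
  finally show ?thesis by (simp add: algebra_simps)
qed

lemma L2_iter:
  fixes H :: "nat \<Rightarrow> 'a \<Rightarrow> real" and w r :: "'a \<Rightarrow> 'a \<Rightarrow> real"
  assumes fin: "finite S"
    and Hnn: "\<And>m a. a \<in> S \<Longrightarrow> 0 \<le> H m a"
    and Hle: "\<And>m b. b \<in> S \<Longrightarrow> H (Suc m) b \<le> (\<Sum>a\<in>S. H m a * w a b)"
    and wle: "\<And>a b. a \<in> S \<Longrightarrow> b \<in> S \<Longrightarrow> w a b \<le> (if a = b then 1 else 0) + r a b"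
    and rnn: "\<And>a b. a \<in> S \<Longrightarrow> b \<in> S \<Longrightarrow> 0 \<le> r a b"
    and rho: "sqrt (\<Sum>b\<in>S. \<Sum>a\<in>S. (r a b)^2) \<le> \<rho>"
  shows "L2_set (H m) S \<le> (1 + \<rho>) ^ m * L2_set (H 0) S"
proof (induct m)
  case 0 then show ?case by simp
next
  case (Suc m)
  have "0 \<le> sqrt (\<Sum>b\<in>S. \<Sum>a\<in>S. (r a b)^2)" by (simp add: sum_nonneg)
  then have r0: "0 \<le> \<rho>" using rho by linarith
  have "L2_set (H (Suc m)) S \<le> (1 + \<rho>) * L2_set (H m) S"
    by (rule L2_step[OF fin Hnn Hle Hnn wle rnn rho])
  also have "\<dots> \<le> (1 + \<rho>) * ((1 + \<rho>) ^ m * L2_set (H 0) S)"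
    by (rule mult_left_mono[OF Suc]) (use r0 in simp)
  finally show ?case by (simp add: mult_ac)
qed

lemma mat_add_rdistrib: "(P + Q) ** R = P ** R + Q ** (R :: complex^'n^'n)"
  for P Q :: "complex^'n^'n"
  by (simp add: matrix_matrix_mult_def vec_eq_iff distrib_right sum.distrib)

lemma opnorm_add: "opnorm (P + Q) \<le> opnorm P + opnorm Q" for P Q :: "complex^'n^'n"
proof (rule opnorm_le)
  fix x
  have "norm ((P + Q) *v x) \<le> norm (P *v x) + norm (Q *v x)"
    by (simp add: matrix_vector_mult_add_rdistrib norm_triangle_ineq)
  also have "\<dots> \<le> opnorm P * norm x + opnorm Q * norm x"
    by (rule add_mono; rule opnorm_apply)
  finally show "norm ((P + Q) *v x) \<le> (opnorm P + opnorm Q) * norm x" by (simp add: algebra_simps)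
qed

lemma opnorm_zero: "opnorm (0 :: complex^'n^'n) = 0"
  using opnorm_le[of "0 :: complex^'n^'n" 0] opnorm_nonneg[of "0 :: complex^'n^'n"] by simp

lemma exp_ineq:
  fixes c :: real and n :: nat
  assumes "0 \<le> c" "1 \<le> n"
  shows "1 + sqrt (real n) * (exp c - 1) \<le> exp (real n * c)"
proof -
  have e: "0 \<le> exp c - 1" using assms(1) by simp
  have "sqrt (real n) \<le> real n"
  proof -
    have "sqrt (real n) * 1 \<le> sqrt (real n) * sqrt (real n)"
      by (rule mult_left_mono) (use assms(2) in auto)
    then show ?thesis by simp
  qed
  then have "1 + sqrt (real n) * (exp c - 1) \<le> 1 + real n * (exp c - 1)"
    using mult_right_mono[OF _ e] by simp
  also have "\<dots> \<le> (1 + (exp c - 1)) ^ n"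
    by (rule Bernoulli_inequality) (use e in simp)
  also have "\<dots> = exp (real n * c)" by (simp add: exp_of_nat_mult)
  finally show ?thesis .
qed

theorem lemma6p1:
  fixes A B :: "complex^'n^'n" and E :: "complex \<Rightarrow> complex^'n^'n" and N :: nat
  assumes herm: "hermitian A"
    and N: "N > 0"
    and proj: "\<And>\<mu>. \<mu> \<in> eigenvalues A \<Longrightarrow> hermitian (E \<mu>) \<and> E \<mu> ** E \<mu> = E \<mu>"
    and eig: "\<And>\<mu>. \<mu> \<in> eigenvalues A \<Longrightarrow> A ** E \<mu> = mat \<mu> ** E \<mu>"
    and sumI: "(\<Sum>\<mu>\<in>eigenvalues A. E \<mu>) = mat 1"
  shows "(\<Sum>k\<in>{0..<N} \<rightarrow>\<^sub>E eigenvalues A.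
            opnorm (Mprod E (mexp ((1 / real N) *\<^sub>R B)) N k))
         \<le> real CARD('n) * exp (real CARD('n) * opnorm B)"
proof -
  define S where "S = eigenvalues A"
  have ps: "projsys S E" unfolding S_def by (rule E_projsys[OF herm proj eig sumI])
  have fin: "finite S" using ps unfolding projsys_def by simp
  have idem: "E a ** E a = E a" if "a \<in> S" for a using proj that unfolding S_def by simp
  have lS: "real (card S) \<le> real CARD('n)" unfolding S_def by (rule card_eig[OF herm proj eig sumI])
  define C where "C = (1 / real N) *\<^sub>R B"
  define X where "X = mexp C"
  define Z where "Z = X - mat 1"
  define c where "c = opnorm C"
  define n where "n = CARD('n)"
  define \<rho> where "\<rho> = sqrt (real n) * (exp c - 1)"
  have c0: "0 \<le> c" unfolding c_def by (rule opnorm_nonneg)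
  have cB: "c \<le> opnorm B / real N"
    unfolding c_def C_def
  proof (rule opnorm_le)
    fix x :: "complex^'n"
    have "norm (((1 / real N) *\<^sub>R B) *v x) = (1 / real N) * norm (B *v x)"
      by (simp add: scaleR_mv)
    also have "\<dots> \<le> (1 / real N) * (opnorm B * norm x)"
      by (rule mult_left_mono[OF opnorm_apply]) simp
    finally show "norm (((1 / real N) *\<^sub>R B) *v x) \<le> opnorm B / real N * norm x" by simp
  qed
  have Xb: "opnorm X \<le> exp c" unfolding X_def c_def by (rule mexp_opnorm)
  have Zb: "opnorm Z \<le> exp c - 1" unfolding Z_def X_def c_def by (rule mexp_opnorm1)
  have XZ: "X = mat 1 + Z" unfolding Z_def by simp
  define H where "H m b = (\<Sum>k\<in>{0..<m} \<rightarrow>\<^sub>E S. opnorm (Mprod E X m k ** E b))" for m b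
  define w where "w a b = opnorm (E a ** X ** E b)" for a b
  define r where "r a b = norm (E a ** Z ** E b)" for a b
  have Hnn: "0 \<le> H m a" for m a unfolding H_def by (rule sum_nonneg) (rule opnorm_nonneg)
  have key: "(\<Sum>k\<in>{0..<Suc m} \<rightarrow>\<^sub>E S. opnorm (Mprod E X (Suc m) k ** R))
       \<le> (\<Sum>a\<in>S. H m a * opnorm (E a ** X ** R))" for m R
  proof -
    have "(\<Sum>k\<in>{0..<Suc m} \<rightarrow>\<^sub>E S. opnorm (Mprod E X (Suc m) k ** R))
        = (\<Sum>a\<in>S. \<Sum>k\<in>{0..<m} \<rightarrow>\<^sub>E S. opnorm (Mprod E X m k ** (E a ** X) ** R))"
      by (simp add: sum_PiE_peel[OF fin] Mprod_Suc Mprod_upd)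
    also have "\<dots> \<le> (\<Sum>a\<in>S. \<Sum>k\<in>{0..<m} \<rightarrow>\<^sub>E S. opnorm (Mprod E X m k ** E a) * opnorm (E a ** X ** R))"
    proof (rule sum_mono, rule sum_mono)
      fix a k assume a: "a \<in> S"
      have "Mprod E X m k ** (E a ** X) ** R = (Mprod E X m k ** E a) ** (E a ** X ** R)"
        by (metis idem[OF a] matrix_mul_assoc)
      then show "opnorm (Mprod E X m k ** (E a ** X) ** R) \<le> opnorm (Mprod E X m k ** E a) * opnorm (E a ** X ** R)"
        by (simp add: opnorm_mult)
    qed
    also have "\<dots> = (\<Sum>a\<in>S. H m a * opnorm (E a ** X ** R))"
      unfolding H_def by (simp add: sum_distrib_right)
    finally show ?thesis .
  qed
  have Hle: "H (Suc m) b \<le> (\<Sum>a\<in>S. H m a * w a b)" if "b \<in> S" for m b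
    unfolding w_def using key[of m "E b"] by (simp add: H_def)
  have wle: "w a b \<le> (if a = b then 1 else 0) + r a b" if a: "a \<in> S" and b: "b \<in> S" for a b
  proof -
    have "E a ** X ** E b = E a ** E b + E a ** Z ** E b"
      by (simp add: XZ matrix_add_ldistrib mat_add_rdistrib)
    then have "w a b \<le> opnorm (E a ** E b) + opnorm (E a ** Z ** E b)"
      unfolding w_def by (simp add: opnorm_add)
    also have "opnorm (E a ** E b) \<le> (if a = b then 1 else 0)"
      using ps a b projsys_opnorm[OF ps a] unfolding projsys_def by (auto simp: opnorm_zero)
    also have "opnorm (E a ** Z ** E b) \<le> r a b" unfolding r_def by (rule opnorm_le_norm)
    finally show ?thesis by simp
  qed
  have rnn: "0 \<le> r a b" for a b unfolding r_def by simp
  have rsum: "(\<Sum>b\<in>S. \<Sum>a\<in>S. (r a b)^2) = (norm Z)^2"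
  proof -
    have "(\<Sum>b\<in>S. \<Sum>a\<in>S. (r a b)^2) = (\<Sum>a\<in>S. \<Sum>b\<in>S. (norm ((E a ** Z) ** E b))^2)"
      unfolding r_def by (rule sum.swap)
    also have "\<dots> = (\<Sum>a\<in>S. (norm (E a ** Z))^2)" by (simp add: projsys_O3[OF ps])
    also have "\<dots> = (norm Z)^2" by (rule projsys_O2[OF ps])
    finally show ?thesis .
  qed
  have rho: "sqrt (\<Sum>b\<in>S. \<Sum>a\<in>S. (r a b)^2) \<le> \<rho>"
  proof -
    have "sqrt (\<Sum>b\<in>S. \<Sum>a\<in>S. (r a b)^2) = norm Z" by (simp add: rsum)
    also have "\<dots> \<le> sqrt (real n) * opnorm Z" unfolding n_def by (rule norm_le_opnorm')
    also have "\<dots> \<le> \<rho>" unfolding \<rho>_def by (rule mult_left_mono[OF Zb]) simp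
    finally show ?thesis .
  qed
  have L2m: "L2_set (H m) S \<le> (1 + \<rho>) ^ m * L2_set (H 0) S" for m
  proof -
    have Hnn': "\<And>m a. a \<in> S \<Longrightarrow> 0 \<le> H m a" by (rule Hnn)
    show ?thesis by (rule L2_iter[where H=H and w=w and r=r, OF fin Hnn' Hle wle rnn rho])
  qed
  have H0: "L2_set (H 0) S \<le> sqrt (real (card S))"
  proof -
    have "L2_set (H 0) S \<le> L2_set (\<lambda>_. 1) S"
    proof (rule L2_set_mono)
      fix b assume b: "b \<in> S"
      show "H 0 b \<le> 1" unfolding H_def using projsys_opnorm[OF ps b] by (simp add: Mprod_0)
      show "0 \<le> H 0 b" by (rule Hnn)
    qed
    then show ?thesis by (simp add: L2_set_constant)
  qed
  have r1: "0 \<le> 1 + \<rho>" unfolding \<rho>_def using c0 by simp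
  obtain m where m: "N = Suc m" using N gr0_conv_Suc by auto
  have "(\<Sum>k\<in>{0..<N} \<rightarrow>\<^sub>E S. opnorm (Mprod E X N k))
      = (\<Sum>k\<in>{0..<Suc m} \<rightarrow>\<^sub>E S. opnorm (Mprod E X (Suc m) k ** mat 1))" by (simp add: m)
  also have "\<dots> \<le> (\<Sum>a\<in>S. H m a * opnorm (E a ** X ** mat 1))" by (rule key)
  also have "\<dots> \<le> (\<Sum>a\<in>S. H m a * exp c)"
  proof (rule sum_mono)
    fix a assume a: "a \<in> S"
    have "opnorm (E a ** X ** mat 1) \<le> opnorm (E a) * opnorm X" by (simp add: opnorm_mult)
    also have "\<dots> \<le> 1 * exp c"
      by (rule mult_mono[OF projsys_opnorm[OF ps a] Xb]) (auto simp: opnorm_nonneg)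
    finally show "H m a * opnorm (E a ** X ** mat 1) \<le> H m a * exp c"
      by (intro mult_left_mono Hnn) simp
  qed
  also have "\<dots> = exp c * (\<Sum>a\<in>S. \<bar>1\<bar> * \<bar>H m a\<bar>)"
  proof -
    have "(\<Sum>a\<in>S. H m a * exp c) = (\<Sum>a\<in>S. H m a) * exp c" by (rule sum_distrib_right[symmetric])
    then show ?thesis by (simp add: Hnn mult.commute)
  qed
  also have "\<dots> \<le> exp c * (L2_set (\<lambda>_. 1) S * L2_set (H m) S)"
    by (rule mult_left_mono[OF L2_set_mult_ineq]) simp
  also have "\<dots> \<le> exp c * (sqrt (real (card S)) * ((1 + \<rho>) ^ m * sqrt (real (card S))))"
  proof -
    have LL: "L2_set (H m) S \<le> (1 + \<rho>) ^ m * sqrt (real (card S))"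
      by (rule order_trans[OF L2m mult_left_mono[OF H0]]) (simp add: r1)
    have "L2_set (\<lambda>_. 1) S * L2_set (H m) S \<le> sqrt (real (card S)) * ((1 + \<rho>) ^ m * sqrt (real (card S)))"
      using mult_left_mono[OF LL, of "sqrt (real (card S))"] by (simp add: L2_set_constant)
    then show ?thesis by (rule mult_left_mono) simp
  qed
  also have "\<dots> = exp c * real (card S) * (1 + \<rho>) ^ m" by simp
  also have "\<dots> \<le> exp (real n * c) * real n * exp (real n * c) ^ m"
  proof (intro mult_mono)
    show "exp c \<le> exp (real n * c)" using c0 unfolding n_def
      by (simp add: mult_le_cancel_right1 mult_nonneg_nonneg)
    show "real (card S) \<le> real n" using lS unfolding n_def .
    show "(1 + \<rho>) ^ m \<le> exp (real n * c) ^ m"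
      by (rule power_mono[OF _ r1]) (unfold \<rho>_def n_def, rule exp_ineq[OF c0], simp)
  qed (auto simp: r1)
  also have "\<dots> = real n * exp (real n * c * real N)"
    by (simp add: m exp_of_nat_mult[symmetric] algebra_simps exp_add)
  also have "\<dots> \<le> real n * exp (real n * opnorm B)"
  proof -
    have "c * real N \<le> opnorm B" using cB N by (simp add: field_simps)
    then have "real n * c * real N \<le> real n * opnorm B"
      by (simp add: mult.assoc mult_left_mono)
    then show ?thesis by (intro mult_left_mono) auto
  qed
  finally show ?thesis unfolding S_def X_def C_def n_def .
qed

end
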